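(* Let $n,m$ be fixed, $V^*\subset V_1\cap V_2$ fixed, $W$ an obfuscating set and $\mathfrak{o}\in\mathfrak{O}_W$. Let $F=F^{(n,m)}_{c,\theta}$ be a nominatable distribution supported on $\mathcal{G}^a_{n,m}=\{(g_1,g_2)\in\mathcal{G}_n\times\mathcal{G}_m:\mathcal{I}(v;g_2)=\{v\}\text{ for all }v\in V^*\}$. For $(g_1,g_2)\in\mathcal{G}^a_{n,m}$ let $(g_1,[\mathfrak{o}(g_2)])=\{(g_1,\tilde g_2)\in\mathcal{G}^a_{n,m}:\tilde g_2\simeq g_2\}$, and for $w\in W$, $u\in V_2$ let $(g_1,[\mathfrak{o}(g_2)])_{w=\mathfrak{o}(u)}=\{(g_1,\tilde g_2)\in\mathcal{G}^a_{n,m}:\tilde g_2=\sigma(g_2)$ for some isomorphism $\sigma$ with $\sigma(\mathfrak{o}^{-1}(w))=u\}$, and $(g_1,[\mathfrak{o}(g_2)])_{w\in\mathfrak{o}(S)}=\bigcup_{u\in S}(g_1,[\mathfrak{o}(g_2)])_{w=\mathfrak{o}(u)}$ for $S\subset V_2$. Choose representatives $(g_1^{(i)},g_2^{(i)})$, $i\in[h]$, so that the sets $(g_1^{(i)},[\mathfrak{o}(g_2^{(i)})])$ partition $\mathcal{G}^a_{n,m}$, and for $u\in W$ put $P^i_u=\mathbb{P}_F\big((g_1^{(i)},[\mathfrak{o}(g_2^{(i)})])_{u\in\mathfrak{o}(V^* )}\mid(g_1^{(i)},[\mathfrak{o}(g_2^{(i)})])\big)$. Define $\Phi^*(g_1^{(i)},\mathfrak{o}(g_2^{(i)}),V^*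 )$ to be the ordering of $W$ in which, for each $j=1,\dots,m$, the $j$-th element is a maximizer of $P^i_u$ over $u\in W$ not among the first $j-1$ elements (ties broken in a fixed arbitrary manner); and for any other $(g_1,g_2)$ in the class $(g_1^{(i)},[\mathfrak{o}(g_2^{(i)})])$, choose an isomorphism $\sigma$ with $\mathfrak{o}(g_2)=\sigma(\mathfrak{o}(g_2^{(i)}))$ and set $\Phi^*(g_1,\mathfrak{o}(g_2),V^* )=\sigma(\Phi^*(g_1^{(i)},\mathfrak{o}(g_2^{(i)}),V^* ))$. Then for every $k\in[m-1]$ and every VN scheme $\Phi\in\mathcal{V}_{nm}$, $L^{(1)}_k(\Phi^*,V^* )\le L^{(1)}_k(\Phi,V^* )$ and $L^{(2)}_k(\Phi^*,V^* )\le L^{(2)}_k(\Phi,V^* )$; i.e. $\Phi^*$ is level-$k$ Bayes optimal for both losses simultaneously for all $k$.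
   Context: $\mathcal{G}_n$ is the set of labeled graphs on $n$ vertices and $\simeq$ denotes graph isomorphism. A nominatable distribution $F^{(n,m)}_{c,\theta}$ is a distribution on $\mathcal{G}_n\times\mathcal{G}_m$ with vertex sets $V_1=\{v_1,\dots,v_n\}$, $V_2=\{u_1,\dots,u_m\}$, $v_i=u_i$ for $i\le c$ (the core), disjoint junk sets $V_1\setminus C$, $V_2\setminus C$, whose induced subgraphs are conditionally independent given $\theta$. An obfuscating set $W$ is disjoint from $V_1,V_2$; $\mathfrak{O}_W$ is the set of bijections $\mathfrak{o}:V_2\to W$, and $\mathfrak{o}(g_2)$ is $g_2$ with vertices relabeled by $\mathfrak{o}$. For $u\in V(g)$, $\mathcal{I}(u;g)$ is the orbit of $u$ under automorphisms of $g$. A VN scheme $\Phi\in\mathcal{V}_{nm}$ assigns to $(g_1,\mathfrak{o}(g_2),V^* )$ a total ordering of $W$ such that the set of positions of $\mathfrak{o}(\mathcal{I}(u;g_2))$ does not depend on $\mathfrak{o}\in\mathfrak{O}_W$ (for all $g_1,g_2,V^*,u$). With $(G_1,G_2)\sim F$ and $\mathrm{rank}$ denoting position in the ordering, $L^{(1)}_k(\Phi,V^* )=\frac1{|V^*|}\sum_{v\in V^*}\mathbb{P}(\mathrm{rank}_{\Phi(G_1,\mathfrak{o}(G_2),V^* )}(\mathfrak{o}(v))\ge k+1)$ (recall error) and $L^{(2)}_k(\Phi,V^* )=1-\frac1k\sum_{v\in V^*}\mathbb{P}(\mathrm{rank}_{\Phi(G_1,\mathfrak{o}(G_2),V^* )}(\mathfrak{o}(v))\le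 k)$ (precision error). *)

theory Defs
  imports "HOL-Probability.Probability"
begin

(* A labeled simple graph on vertex set V is given by its edge set:
   a set of 2-element subsets of V. *)
definition graph_on :: "'a set \<Rightarrow> 'a set set \<Rightarrow> bool" where
  "graph_on V E \<longleftrightarrow> (\<forall>e\<in>E. e \<subseteq> V \<and> card e = 2)"

definition relabel :: "('a \<Rightarrow> 'b) \<Rightarrow> 'a set set \<Rightarrow> 'b set set" where
  "relabel f E = (\<lambda>e. f ` e) ` E"

definition is_iso :: "'a set \<Rightarrow> 'b set \<Rightarrow> ('a \<Rightarrow> 'b) \<Rightarrow> 'a set set \<Rightarrow> 'b set set \<Rightarrow> bool" where
  "is_iso V V' \<sigma> E E' \<longleftrightarrow> bij_betw \<sigma> V V' \<and> relabel \<sigma> E = E'"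

definition orbit :: "'a set \<Rightarrow> 'a set set \<Rightarrow> 'a \<Rightarrow> 'a set" where
  "orbit V E u = {\<sigma> u | \<sigma>. is_iso V V \<sigma> E E}"

definition induced :: "'a set set \<Rightarrow> 'a set \<Rightarrow> 'a set set" where
  "induced E S = {e \<in> E. e \<subseteq> S}"

(* nominatable distribution on G_n x G_m: vertex sets V1, V2 with core C = V1 \<inter> V2,
   support in graphs on V1 times graphs on V2, and the subgraphs induced on the junk
   sets V1 - C and V2 - C independent (theta being fixed). *)
definition nominatable :: "'v set \<Rightarrow> 'v set \<Rightarrow> ('v set set \<times> 'v set set) pmf \<Rightarrow> bool" where
  "nominatable V1 V2 F \<longleftrightarrow> finite V1 \<and> finite V2 \<and>
     set_pmf F \<subseteq> {(g1, g2). graph_on V1 g1 \<and> graph_on V2 g2} \<and>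
     map_pmf (\<lambda>(g1, g2). (induced g1 (V1 - V2), induced g2 (V2 - V1))) F =
       pair_pmf (map_pmf (\<lambda>(g1, g2). induced g1 (V1 - V2)) F)
                (map_pmf (\<lambda>(g1, g2). induced g2 (V2 - V1)) F)"

definition is_ordering :: "'w set \<Rightarrow> 'w list \<Rightarrow> bool" where
  "is_ordering W L \<longleftrightarrow> distinct L \<and> set L = W"

(* rank (1-based position) of w in the ordering L *)
definition rank :: "'w list \<Rightarrow> 'w \<Rightarrow> nat" where
  "rank L w = Suc (LEAST i. i < length L \<and> L ! i = w)"

definition positions :: "'w list \<Rightarrow> 'w set \<Rightarrow> nat set" where
  "positions L S = {i. i < length L \<and> L ! i \<in> S}"

definition Ga :: "'v set \<Rightarrow> 'v set \<Rightarrow> 'v set \<Rightarrow> ('v set set \<times> 'v set set) set" where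
  "Ga V1 V2 Vs = {(g1, g2). graph_on V1 g1 \<and> graph_on V2 g2 \<and> (\<forall>v\<in>Vs. orbit V2 g2 v = {v})}"

definition cls :: "'v set \<Rightarrow> 'v set \<Rightarrow> 'v set \<Rightarrow> 'v set set \<Rightarrow> 'v set set
     \<Rightarrow> ('v set set \<times> 'v set set) set" where
  "cls V1 V2 Vs g1 g2 = {(g1', g2') \<in> Ga V1 V2 Vs. g1' = g1 \<and> (\<exists>\<sigma>. is_iso V2 V2 \<sigma> g2 g2')}"

definition cls_at :: "'v set \<Rightarrow> 'v set \<Rightarrow> 'v set \<Rightarrow> ('v \<Rightarrow> 'w) \<Rightarrow> 'v set set \<Rightarrow> 'v set set
     \<Rightarrow> 'w \<Rightarrow> 'v \<Rightarrow> ('v set set \<times> 'v set set) set" where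
  "cls_at V1 V2 Vs ob g1 g2 w u = {(g1', g2') \<in> Ga V1 V2 Vs. g1' = g1 \<and>
      (\<exists>\<sigma>. is_iso V2 V2 \<sigma> g2 g2' \<and> \<sigma> (inv_into V2 ob w) = u)}"

definition cls_in :: "'v set \<Rightarrow> 'v set \<Rightarrow> 'v set \<Rightarrow> ('v \<Rightarrow> 'w) \<Rightarrow> 'v set set \<Rightarrow> 'v set set
     \<Rightarrow> 'w \<Rightarrow> 'v set \<Rightarrow> ('v set set \<times> 'v set set) set" where
  "cls_in V1 V2 Vs ob g1 g2 w S = (\<Union>u\<in>S. cls_at V1 V2 Vs ob g1 g2 w u)"

definition cond_prob :: "'a pmf \<Rightarrow> 'a set \<Rightarrow> 'a set \<Rightarrow> real" where
  "cond_prob F A B = measure_pmf.prob F (A \<inter> B) / measure_pmf.prob F B"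

definition greedy_ordering :: "'w set \<Rightarrow> ('w \<Rightarrow> real) \<Rightarrow> 'w list \<Rightarrow> bool" where
  "greedy_ordering W P L \<longleftrightarrow> is_ordering W L \<and>
     (\<forall>j < length L. \<forall>u \<in> W - set (take j L). P u \<le> P (L ! j))"

(* Phs (a function of g1 and the obfuscated graph ob(g2), Vs fixed) arises from the
   construction of Phi*: on each class (g1,[ob(g2)]) there is a representative (r1,r2)
   where Phs is a greedy ordering for P_u = P_F(class_{u in ob(Vs)} | class), and on every
   element of the class Phs is obtained by transporting along a W-isomorphism sigma with
   ob(g2') = sigma(ob(r2)). *)
definition bayes_construction :: "('v set set \<times> 'v set set) pmf \<Rightarrow> 'v set \<Rightarrow> 'v set \<Rightarrow> 'w set
     \<Rightarrow> 'v set \<Rightarrow> ('v \<Rightarrow> 'w) \<Rightarrow> ('v set set \<Rightarrow> 'w set set \<Rightarrow> 'w list) \<Rightarrow> bool" where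
  "bayes_construction F V1 V2 W Vs ob Phs \<longleftrightarrow>
     (\<forall>(g1, g2) \<in> Ga V1 V2 Vs. \<exists>(r1, r2) \<in> cls V1 V2 Vs g1 g2.
        greedy_ordering W
          (\<lambda>u. cond_prob F (cls_in V1 V2 Vs ob r1 r2 u Vs) (cls V1 V2 Vs r1 r2))
          (Phs r1 (relabel ob r2)) \<and>
        (\<forall>(g1', g2') \<in> cls V1 V2 Vs g1 g2. \<exists>\<sigma>.
           is_iso W W \<sigma> (relabel ob r2) (relabel ob g2') \<and>
           Phs g1' (relabel ob g2') = map \<sigma> (Phs r1 (relabel ob r2))))"

definition vn_scheme :: "'v set \<Rightarrow> 'v set \<Rightarrow> 'w set
     \<Rightarrow> ('v set set \<Rightarrow> 'w set set \<Rightarrow> 'v set \<Rightarrow> 'w list) \<Rightarrow> bool" where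
  "vn_scheme V1 V2 W Phi \<longleftrightarrow>
     (\<forall>g1 g2 V' ob. graph_on V1 g1 \<and> graph_on V2 g2 \<and> V' \<subseteq> V1 \<inter> V2 \<and> bij_betw ob V2 W
        \<longrightarrow> is_ordering W (Phi g1 (relabel ob g2) V')) \<and>
     (\<forall>g1 g2 V' u ob o'. graph_on V1 g1 \<and> graph_on V2 g2 \<and> V' \<subseteq> V1 \<inter> V2 \<and> u \<in> V2 \<and>
        bij_betw ob V2 W \<and> bij_betw o' V2 W \<longrightarrow>
        positions (Phi g1 (relabel ob g2) V') (ob ` orbit V2 g2 u) =
        positions (Phi g1 (relabel o' g2) V') (o' ` orbit V2 g2 u))"

(* L^(1)_k : recall error; Ph is the scheme with Vs already plugged in *)
definition loss1 :: "('v set set \<times> 'v set set) pmf \<Rightarrow> ('v \<Rightarrow> 'w)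
     \<Rightarrow> ('v set set \<Rightarrow> 'w set set \<Rightarrow> 'w list) \<Rightarrow> 'v set \<Rightarrow> nat \<Rightarrow> real" where
  "loss1 F ob Ph Vs k = (1 / real (card Vs)) *
     (\<Sum>v\<in>Vs. measure_pmf.prob F {(g1, g2). rank (Ph g1 (relabel ob g2)) (ob v) \<ge> k + 1})"

definition loss2 :: "('v set set \<times> 'v set set) pmf \<Rightarrow> ('v \<Rightarrow> 'w)
     \<Rightarrow> ('v set set \<Rightarrow> 'w set set \<Rightarrow> 'w list) \<Rightarrow> 'v set \<Rightarrow> nat \<Rightarrow> real" where
  "loss2 F ob Ph Vs k = 1 - (1 / real k) *
     (\<Sum>v\<in>Vs. measure_pmf.prob F {(g1, g2). rank (Ph g1 (relabel ob g2)) (ob v) \<le> k})"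

end

theory Submission
  imports Defs
begin

lemma relabel_comp: "relabel (f \<circ> g) E = relabel f (relabel g E)"
  unfolding relabel_def by (auto simp: image_comp)

lemma relabel_id_on:
  assumes "graph_on V E" "\<And>a. a \<in> V \<Longrightarrow> f a = a"
  shows "relabel f E = E"
proof -
  have h: "f ` e = e" if "e \<in> E" for e
  proof -
    have "e \<subseteq> V" using assms(1) that unfolding graph_on_def by blast
    then have "f ` e = id ` e" using assms(2) by (intro image_cong) auto
    then show ?thesis by simp
  qed
  have "(\<lambda>e. f ` e) ` E = (\<lambda>e. e) ` E" by (rule image_cong) (auto simp: h)
  then show ?thesis unfolding relabel_def by simp
qed

lemma relabel_cong:
  assumes "graph_on V E" "\<And>a. a \<in> V \<Longrightarrow> f a = g a"
  shows "relabel f E = relabel g E"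
proof -
  have h: "f ` e = g ` e" if "e \<in> E" for e
  proof -
    have "e \<subseteq> V" using assms(1) that unfolding graph_on_def by blast
    then show "f ` e = g ` e" using assms(2) by (intro image_cong) auto
  qed
  have "(\<lambda>e. f ` e) ` E = (\<lambda>e. g ` e) ` E" by (rule image_cong) (auto simp: h)
  then show ?thesis unfolding relabel_def by simp
qed

lemma is_iso_refl: "is_iso V V id E E"
  unfolding is_iso_def relabel_def by auto

lemma is_iso_trans: "is_iso V V \<sigma> E1 E2 \<Longrightarrow> is_iso V V \<tau> E2 E3 \<Longrightarrow> is_iso V V (\<tau> \<circ> \<sigma>) E1 E3"
  unfolding is_iso_def using bij_betw_trans relabel_comp by metis

lemma is_iso_sym:
  assumes "is_iso V V \<sigma> E1 E2" "graph_on V E1"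
  shows "is_iso V V (inv_into V \<sigma>) E2 E1"
proof -
  have b: "bij_betw \<sigma> V V" and r: "relabel \<sigma> E1 = E2" using assms unfolding is_iso_def by auto
  have "relabel (inv_into V \<sigma>) E2 = relabel (inv_into V \<sigma> \<circ> \<sigma>) E1" using r relabel_comp by metis
  also have "\<dots> = E1" using assms(2) b
    by (intro relabel_id_on[of V]) (auto simp: bij_betw_def)
  finally show ?thesis using b bij_betw_inv_into unfolding is_iso_def by blast
qed


lemma rank_pos:
  assumes "positions L {a} = positions L' {b}"
  shows "rank L a = rank L' b"
proof -
  have "\<And>i. (i < length L \<and> L ! i = a) = (i < length L' \<and> L' ! i = b)"
    using assms unfolding positions_def set_eq_iff by simp
  then show ?thesis unfolding rank_def by simp
qed

lemma rank_le_iff: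
  assumes "distinct L" "w \<in> set L"
  shows "rank L w \<le> k \<longleftrightarrow> w \<in> set (take k L)"
proof -
  obtain i where i: "i < length L" "L ! i = w" using assms(2) by (meson in_set_conv_nth)
  have "(LEAST i. i < length L \<and> L ! i = w) = i"
    using i assms(1) by (intro Least_equality) (auto simp: nth_eq_iff_index_eq)
  then have "rank L w = Suc i" unfolding rank_def by simp
  moreover have "w \<in> set (take k L) \<longleftrightarrow> i < k"
    using i assms(1) by (auto simp: in_set_conv_nth nth_eq_iff_index_eq)
  ultimately show ?thesis by (simp add: Suc_le_eq)
qed

lemma card_set_take:
  assumes "distinct L" "k \<le> length L"
  shows "card (set (take k L)) = k"
  using assms by (simp add: distinct_card)

lemma greedy_opt:
  fixes P :: "'w \<Rightarrow> real"
  assumes g: "greedy_ordering W P Ls" and L: "distinct L" "set L \<subseteq> W"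
    and k: "k \<le> length Ls" "k \<le> length L" and fin: "finite W"
  shows "(\<Sum>w\<in>set (take k L). P w) \<le> (\<Sum>w\<in>set (take k Ls). P w)"
proof -
  define A where "A = set (take k Ls)"
  define B where "B = set (take k L)"
  have dLs: "distinct Ls" "set Ls = W" and gr: "\<forall>j < length Ls. \<forall>u \<in> W - set (take j Ls). P u \<le> P (Ls ! j)"
    using g unfolding greedy_ordering_def is_ordering_def by auto
  have cA: "card A = k" unfolding A_def using dLs k card_set_take by blast
  have cB: "card B = k" unfolding B_def using L k card_set_take by blast
  have AW: "A \<subseteq> W" unfolding A_def using dLs set_take_subset by metis
  have BW: "B \<subseteq> W" unfolding B_def using L set_take_subset by (metis order_trans)
  have fA: "finite A" and fB: "finite B" using AW BW fin finite_subset by auto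
  have key: "P b \<le> P a" if aA: "a \<in> A" and bW: "b \<in> W - A" for a b
  proof -
    obtain j where j0: "j < length (take k Ls)" "take k Ls ! j = a"
      using aA unfolding A_def in_set_conv_nth by blast
    then have j: "j < k" "j < length Ls" "Ls ! j = a" by auto
    have "set (take j Ls) \<subseteq> A" unfolding A_def using j(1)
      by (simp add: set_take_subset_set_take)
    then have "b \<in> W - set (take j Ls)" using bW by blast
    then show ?thesis using gr j by auto
  qed
  have cc: "card (A - B) = card (B - A)"
    using cA cB fA fB by (simp add: card_Diff_subset_Int Int_commute)
  have sA: "sum P A = sum P (A \<inter> B) + sum P (A - B)" using fA by (rule sum.Int_Diff)
  have sB: "sum P B = sum P (B \<inter> A) + sum P (B - A)" using fB by (rule sum.Int_Diff)
  have "sum P (B - A) \<le> sum P (A - B)"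
  proof (cases "B - A = {}")
    case True
    then have "A - B = {}" using cc fA by (metis card_0_eq finite_Diff card.empty)
    then show ?thesis using True by simp
  next
    case False
    define c where "c = Max (P ` (B - A))"
    have f: "finite (P ` (B - A))" using fB by simp
    have "sum P (B - A) \<le> of_nat (card (B - A)) * c"
      by (rule sum_bounded_above) (use f in \<open>auto simp: c_def\<close>)
    moreover have "of_nat (card (A - B)) * c \<le> sum P (A - B)"
    proof (rule sum_bounded_below)
      fix a assume "a \<in> A - B"
      have "c \<in> P ` (B - A)" unfolding c_def using f False by (intro Max_in) auto
      then obtain b where "b \<in> B - A" "c = P b" by blast
      then show "c \<le> P a" using key \<open>a \<in> A - B\<close> BW by auto
    qed
    ultimately show ?thesis using cc by simp
  qed
  then show ?thesis using sA sB unfolding A_def B_def by (simp add: Int_commute)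
qed

lemma Ga_D: "(g1,g2) \<in> Ga V1 V2 Vs \<Longrightarrow> graph_on V1 g1 \<and> graph_on V2 g2 \<and> (\<forall>v\<in>Vs. orbit V2 g2 v = {v})"
  by (simp add: Ga_def)

lemma cls_sub_Ga: "cls V1 V2 Vs g1 g2 \<subseteq> Ga V1 V2 Vs"
  by (auto simp: cls_def)

lemma self_cls: "(g1,g2) \<in> Ga V1 V2 Vs \<Longrightarrow> (g1,g2) \<in> cls V1 V2 Vs g1 g2"
  using is_iso_refl by (auto simp: cls_def)

lemma cls_eq:
  assumes g: "(g1,g2) \<in> Ga V1 V2 Vs" and h: "(h1,h2) \<in> cls V1 V2 Vs g1 g2"
  shows "cls V1 V2 Vs h1 h2 = cls V1 V2 Vs g1 g2"
proof -
  obtain \<sigma> where h1: "h1 = g1" and s: "is_iso V2 V2 \<sigma> g2 h2" and hG: "(h1,h2) \<in> Ga V1 V2 Vs"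
    using h unfolding cls_def by auto
  have gg: "graph_on V2 g2" using Ga_D[OF g] by simp
  have si: "is_iso V2 V2 (inv_into V2 \<sigma>) h2 g2" using is_iso_sym[OF s gg] .
  show ?thesis
  proof (intro set_eqI iffI)
    fix z assume "z \<in> cls V1 V2 Vs h1 h2"
    then obtain z1 z2 \<rho> where "z = (z1,z2)" "(z1,z2) \<in> Ga V1 V2 Vs" "z1 = h1" "is_iso V2 V2 \<rho> h2 z2"
      unfolding cls_def by auto
    then show "z \<in> cls V1 V2 Vs g1 g2" unfolding cls_def using is_iso_trans[OF s] h1 by blast
  next
    fix z assume "z \<in> cls V1 V2 Vs g1 g2"
    then obtain z1 z2 \<rho> where "z = (z1,z2)" "(z1,z2) \<in> Ga V1 V2 Vs" "z1 = g1" "is_iso V2 V2 \<rho> g2 z2"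
      unfolding cls_def by auto
    then show "z \<in> cls V1 V2 Vs h1 h2" unfolding cls_def using is_iso_trans[OF si] h1 by blast
  qed
qed

lemma cls_in_sub: "cls_in V1 V2 Vs ob r1 r2 w S \<subseteq> cls V1 V2 Vs r1 r2"
  unfolding cls_in_def cls_at_def cls_def by blast

lemma hit_char:
  assumes r: "(r1,r2) \<in> Ga V1 V2 Vs" and g: "(g1,g2) \<in> Ga V1 V2 Vs" and e: "g1 = r1"
    and t: "is_iso V2 V2 \<tau> r2 g2" and y: "inv_into V2 ob w \<in> V2"
  shows "(g1,g2) \<in> cls_in V1 V2 Vs ob r1 r2 w Vs \<longleftrightarrow> \<tau> (inv_into V2 ob w) \<in> Vs"
proof
  assume "(g1,g2) \<in> cls_in V1 V2 Vs ob r1 r2 w Vs"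
  then obtain u \<sigma> where u: "u \<in> Vs" and s: "is_iso V2 V2 \<sigma> r2 g2" and su: "\<sigma> (inv_into V2 ob w) = u"
    unfolding cls_in_def cls_at_def by auto
  have rg: "graph_on V2 r2" and orb: "orbit V2 g2 u = {u}" using Ga_D[OF r] Ga_D[OF g] u by auto
  have a: "is_iso V2 V2 (\<tau> \<circ> inv_into V2 \<sigma>) g2 g2"
    using is_iso_trans[OF is_iso_sym[OF s rg] t] .
  have inj: "inj_on \<sigma> V2" using s unfolding is_iso_def bij_betw_def by auto
  have "(\<tau> \<circ> inv_into V2 \<sigma>) u = \<tau> (inv_into V2 ob w)"
    using su inj y by (auto simp: inv_into_f_f)
  then have "\<tau> (inv_into V2 ob w) = (\<tau> \<circ> inv_into V2 \<sigma>) u \<and> is_iso V2 V2 (\<tau> \<circ> inv_into V2 \<sigma>) g2 g2"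
    using a by simp
  then have "\<tau> (inv_into V2 ob w) \<in> orbit V2 g2 u" unfolding orbit_def by blast
  then show "\<tau> (inv_into V2 ob w) \<in> Vs" using orb u by auto
next
  assume "\<tau> (inv_into V2 ob w) \<in> Vs"
  then show "(g1,g2) \<in> cls_in V1 V2 Vs ob r1 r2 w Vs"
    unfolding cls_in_def cls_at_def using g e t by blast
qed

lemma card_bij_filter:
  assumes b: "bij_betw \<rho> V2 W" and Vs: "Vs \<subseteq> V2" and T: "T \<subseteq> W"
    and h: "\<And>w. w \<in> W \<Longrightarrow> h w \<in> V2 \<and> \<rho> (h w) = w"
  shows "card {v\<in>Vs. \<rho> v \<in> T} = card {w\<in>T. h w \<in> Vs}"
proof -
  have inj: "inj_on \<rho> V2" and im: "\<rho> ` V2 = W" using b unfolding bij_betw_def by auto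
  have hr: "h (\<rho> v) = v" if "v \<in> V2" for v
  proof -
    have "\<rho> v \<in> W" using im that by auto
    then have "h (\<rho> v) \<in> V2" "\<rho> (h (\<rho> v)) = \<rho> v" using h by auto
    then show ?thesis using inj that by (meson inj_onD)
  qed
  have eq: "\<rho> ` {v\<in>Vs. \<rho> v \<in> T} = {w\<in>T. h w \<in> Vs}"
  proof (intro set_eqI iffI)
    fix w assume "w \<in> \<rho> ` {v\<in>Vs. \<rho> v \<in> T}"
    then show "w \<in> {w\<in>T. h w \<in> Vs}" using hr Vs by auto
  next
    fix w assume w: "w \<in> {w\<in>T. h w \<in> Vs}"
    then have "w = \<rho> (h w)" using h T by auto
    then show "w \<in> \<rho> ` {v\<in>Vs. \<rho> v \<in> T}" using w by (metis (mono_tags, lifting) image_eqI mem_Collect_eq)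
  qed
  have "inj_on \<rho> {v\<in>Vs. \<rho> v \<in> T}" using inj Vs by (auto intro: inj_on_subset)
  then have "card (\<rho> ` {v\<in>Vs. \<rho> v \<in> T}) = card {v\<in>Vs. \<rho> v \<in> T}" by (rule card_image)
  then show ?thesis using eq by simp
qed

lemma relabel_inv_back:
  assumes "graph_on V E" "inj_on f V"
  shows "relabel (g \<circ> inv_into V f) (relabel f E) = relabel g E"
proof -
  have "relabel (g \<circ> inv_into V f) (relabel f E) = relabel (g \<circ> inv_into V f \<circ> f) E"
    by (simp add: relabel_comp)
  also have "\<dots> = relabel g E" using assms by (intro relabel_cong[of V]) (auto simp: inv_into_f_f)
  finally show ?thesis .
qed

lemma N_Phi:
  assumes vn: "vn_scheme V1 V2 W Phi" and Vs: "Vs \<subseteq> V1 \<inter> V2" and ob: "bij_betw ob V2 W"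
    and r: "(r1,r2) \<in> Ga V1 V2 Vs" and g: "(g1,g2) \<in> Ga V1 V2 Vs" and e: "g1 = r1"
    and t: "is_iso V2 V2 \<tau> r2 g2"
  shows "card {v\<in>Vs. rank (Phi g1 (relabel ob g2) Vs) (ob v) \<le> k} =
         card {w \<in> set (take k (Phi r1 (relabel ob r2) Vs)). (g1,g2) \<in> cls_in V1 V2 Vs ob r1 r2 w Vs}"
proof -
  define L where "L = Phi r1 (relabel ob r2) Vs"
  define \<rho> where "\<rho> = ob \<circ> inv_into V2 \<tau>"
  have rg: "graph_on V1 r1" "graph_on V2 r2" and gg: "graph_on V1 g1" "graph_on V2 g2"
    and orb: "\<forall>v\<in>Vs. orbit V2 g2 v = {v}"
    using Ga_D[OF r] Ga_D[OF g] by auto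
  have vn1: "is_ordering W (Phi g1 (relabel ob g2) Vs)"
    if "graph_on V1 g1" "graph_on V2 g2" "bij_betw ob V2 W" for g1 g2 ob
    using conjunct1[OF vn[unfolded vn_scheme_def], rule_format, of g1 g2 Vs ob] Vs that by blast
  have vn2: "positions (Phi g1 (relabel ob g2) Vs) (ob ` orbit V2 g2 u) =
        positions (Phi g1 (relabel o' g2) Vs) (o' ` orbit V2 g2 u)"
    if "graph_on V1 g1" "graph_on V2 g2" "u \<in> V2" "bij_betw ob V2 W" "bij_betw o' V2 W" for g1 g2 u ob o'
    using conjunct2[OF vn[unfolded vn_scheme_def], rule_format, of g1 g2 Vs u ob o'] Vs that by blast
  have Lo: "is_ordering W L" unfolding L_def using vn1 rg ob by blast
  then have dL: "distinct L" "set L = W" unfolding is_ordering_def by auto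
  have tb: "bij_betw \<tau> V2 V2" and tr: "relabel \<tau> r2 = g2" using t unfolding is_iso_def by auto
  have tinj: "inj_on \<tau> V2" using tb bij_betw_def by blast
  have tib: "bij_betw (inv_into V2 \<tau>) V2 V2" using tb bij_betw_inv_into by blast
  have rb: "bij_betw \<rho> V2 W" unfolding \<rho>_def using bij_betw_trans[OF tib ob] .
  have rel: "relabel \<rho> g2 = relabel ob r2"
    unfolding \<rho>_def tr[symmetric] using relabel_inv_back[OF rg(2) tinj] .
  have rk: "rank (Phi g1 (relabel ob g2) Vs) (ob v) \<le> k \<longleftrightarrow> \<rho> v \<in> set (take k L)" if v: "v \<in> Vs" for v
  proof -
    have vV: "v \<in> V2" using v Vs by auto
    have "positions (Phi g1 (relabel ob g2) Vs) (ob ` orbit V2 g2 v) =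
        positions (Phi g1 (relabel \<rho> g2) Vs) (\<rho> ` orbit V2 g2 v)"
      using vn2[OF gg vV ob rb] .
    then have "positions (Phi g1 (relabel ob g2) Vs) {ob v} = positions L {\<rho> v}"
      using orb v rel e unfolding L_def by simp
    then have "rank (Phi g1 (relabel ob g2) Vs) (ob v) = rank L (\<rho> v)" by (rule rank_pos)
    moreover have "\<rho> v \<in> set L" using rb vV dL unfolding bij_betw_def by auto
    ultimately show ?thesis using rank_le_iff[OF dL(1)] by simp
  qed
  have "card {v\<in>Vs. rank (Phi g1 (relabel ob g2) Vs) (ob v) \<le> k} = card {v\<in>Vs. \<rho> v \<in> set (take k L)}"
    using rk by (metis (mono_tags, lifting))
  also have "\<dots> = card {w \<in> set (take k L). \<tau> (inv_into V2 ob w) \<in> Vs}"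
  proof (rule card_bij_filter[OF rb])
    show "Vs \<subseteq> V2" using Vs by auto
    show "set (take k L) \<subseteq> W" using dL set_take_subset by metis
    fix w assume w: "w \<in> W"
    have y: "inv_into V2 ob w \<in> V2" using ob w by (metis bij_betw_def inv_into_into)
    have "\<tau> (inv_into V2 ob w) \<in> V2" using tb y bij_betwE by blast
    moreover have "\<rho> (\<tau> (inv_into V2 ob w)) = w"
      unfolding \<rho>_def using y tinj ob w by (simp add: inv_into_f_f bij_betw_def f_inv_into_f)
    ultimately show "\<tau> (inv_into V2 ob w) \<in> V2 \<and> \<rho> (\<tau> (inv_into V2 ob w)) = w" by simp
  qed
  also have "\<dots> = card {w \<in> set (take k L). (g1,g2) \<in> cls_in V1 V2 Vs ob r1 r2 w Vs}"
  proof -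
    have "w \<in> set (take k L) \<Longrightarrow> (\<tau> (inv_into V2 ob w) \<in> Vs) = ((g1,g2) \<in> cls_in V1 V2 Vs ob r1 r2 w Vs)" for w
    proof -
      assume "w \<in> set (take k L)"
      then have "w \<in> W" using dL set_take_subset by (metis subsetD)
      then have y: "inv_into V2 ob w \<in> V2" using ob by (metis bij_betw_def inv_into_into)
      show ?thesis using hit_char[OF r g e t y] by simp
    qed
    then show ?thesis by (metis (mono_tags, lifting))
  qed
  finally show ?thesis unfolding L_def .
qed

lemma N_Phs:
  assumes ob: "bij_betw ob V2 W" and Vs: "Vs \<subseteq> V1 \<inter> V2"
    and r: "(r1,r2) \<in> Ga V1 V2 Vs" and g: "(g1,g2) \<in> Ga V1 V2 Vs" and e: "g1 = r1"
    and s: "is_iso W W \<sigma> (relabel ob r2) (relabel ob g2)" and Lo: "is_ordering W Ls"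
    and M: "M = map \<sigma> Ls"
  shows "card {v\<in>Vs. rank M (ob v) \<le> k} =
         card {w \<in> set (take k Ls). (g1,g2) \<in> cls_in V1 V2 Vs ob r1 r2 w Vs}"
proof -
  define \<rho> where "\<rho> = inv_into W \<sigma> \<circ> ob"
  define \<tau> where "\<tau> = inv_into V2 ob \<circ> \<sigma> \<circ> ob"
  have rg: "graph_on V2 r2" and gg: "graph_on V2 g2" using Ga_D[OF r] Ga_D[OF g] by auto
  have dL: "distinct Ls" "set Ls = W" using Lo unfolding is_ordering_def by auto
  have sb: "bij_betw \<sigma> W W" and sr: "relabel \<sigma> (relabel ob r2) = relabel ob g2"
    using s unfolding is_iso_def by auto
  have sinj: "inj_on \<sigma> W" using sb bij_betw_def by blast
  have obinj: "inj_on ob V2" using ob bij_betw_def by blast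
  have obi: "bij_betw (inv_into V2 ob) W V2" using ob bij_betw_inv_into by blast
  have sib: "bij_betw (inv_into W \<sigma>) W W" using sb bij_betw_inv_into by blast
  have rb: "bij_betw \<rho> V2 W" unfolding \<rho>_def using bij_betw_trans[OF ob sib] .
  have tb: "bij_betw \<tau> V2 V2" unfolding \<tau>_def using bij_betw_trans[OF bij_betw_trans[OF ob sb] obi] by (simp add: comp_assoc)
  have "relabel \<tau> r2 = relabel (inv_into V2 ob) (relabel \<sigma> (relabel ob r2))"
    unfolding \<tau>_def by (simp add: relabel_comp)
  also have "\<dots> = relabel (inv_into V2 ob \<circ> ob) g2" using sr by (simp add: relabel_comp)
  also have "\<dots> = g2" using gg obinj by (intro relabel_id_on[of V2]) (auto simp: inv_into_f_f)
  finally have t: "is_iso V2 V2 \<tau> r2 g2" using tb unfolding is_iso_def by simp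
  have dM: "distinct M" using dL sinj M by (simp add: distinct_map)
  have sM: "set M = W" using dL sb M by (simp add: bij_betw_def)
  have rk: "rank M (ob v) \<le> k \<longleftrightarrow> \<rho> v \<in> set (take k Ls)" if v: "v \<in> Vs" for v
  proof -
    have vV: "v \<in> V2" using v Vs by auto
    have oW: "ob v \<in> W" using ob vV bij_betwE by blast
    have "rank M (ob v) \<le> k \<longleftrightarrow> ob v \<in> set (take k M)" using rank_le_iff[OF dM] oW sM by simp
    also have "\<dots> \<longleftrightarrow> ob v \<in> \<sigma> ` set (take k Ls)" using M by (simp add: take_map)
    also have "\<dots> \<longleftrightarrow> \<rho> v \<in> set (take k Ls)"
    proof
      assume "ob v \<in> \<sigma> ` set (take k Ls)"
      then obtain t where t: "t \<in> set (take k Ls)" "ob v = \<sigma> t" by blast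
      then have "t \<in> W" using dL set_take_subset by (metis subsetD)
      then show "\<rho> v \<in> set (take k Ls)" unfolding \<rho>_def using t sinj by (simp add: inv_into_f_f)
    next
      assume "\<rho> v \<in> set (take k Ls)"
      moreover have "\<sigma> (\<rho> v) = ob v" unfolding \<rho>_def using oW sb by (simp add: bij_betw_def f_inv_into_f)
      ultimately show "ob v \<in> \<sigma> ` set (take k Ls)" by (metis imageI)
    qed
    finally show ?thesis .
  qed
  have "card {v\<in>Vs. rank M (ob v) \<le> k} = card {v\<in>Vs. \<rho> v \<in> set (take k Ls)}"
    using rk by (metis (mono_tags, lifting))
  also have "\<dots> = card {w \<in> set (take k Ls). \<tau> (inv_into V2 ob w) \<in> Vs}"
  proof (rule card_bij_filter[OF rb])
    show "Vs \<subseteq> V2" using Vs by auto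
    show "set (take k Ls) \<subseteq> W" using dL set_take_subset by metis
    fix w assume w: "w \<in> W"
    have y: "inv_into V2 ob w \<in> V2" using obi w bij_betwE by blast
    have ob2: "ob (inv_into V2 ob w) = w" using ob w by (simp add: bij_betw_def f_inv_into_f)
    have sw: "\<sigma> w \<in> W" using sb w bij_betwE by blast
    have "\<tau> (inv_into V2 ob w) = inv_into V2 ob (\<sigma> w)" unfolding \<tau>_def using ob2 by simp
    moreover have "inv_into V2 ob (\<sigma> w) \<in> V2" using obi sw bij_betwE by blast
    moreover have "\<rho> (inv_into V2 ob (\<sigma> w)) = w"
      unfolding \<rho>_def using sw ob sinj w by (simp add: bij_betw_def f_inv_into_f inv_into_f_f)
    ultimately show "\<tau> (inv_into V2 ob w) \<in> V2 \<and> \<rho> (\<tau> (inv_into V2 ob w)) = w" by simp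
  qed
  also have "\<dots> = card {w \<in> set (take k Ls). (g1,g2) \<in> cls_in V1 V2 Vs ob r1 r2 w Vs}"
  proof -
    have "w \<in> set (take k Ls) \<Longrightarrow> (\<tau> (inv_into V2 ob w) \<in> Vs) = ((g1,g2) \<in> cls_in V1 V2 Vs ob r1 r2 w Vs)" for w
    proof -
      assume "w \<in> set (take k Ls)"
      then have "w \<in> W" using dL set_take_subset by (metis subsetD)
      then have y: "inv_into V2 ob w \<in> V2" using obi bij_betwE by blast
      show ?thesis using hit_char[OF r g e t y] by simp
    qed
    then show ?thesis by (metis (mono_tags, lifting))
  qed
  finally show ?thesis .
qed

lemma prob_as_sum:
  assumes "finite (set_pmf F)"
  shows "measure_pmf.prob F A = sum (pmf F) (A \<inter> set_pmf F)"
  using assms measure_Int_set_pmf[of F A] measure_measure_pmf_finite[of "A \<inter> set_pmf F" F]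
  by simp

lemma sum_prob_card:
  assumes fin: "finite (set_pmf F)" and fV: "finite Vs"
  shows "(\<Sum>v\<in>Vs. measure_pmf.prob F {x. Q v x}) =
         (\<Sum>x\<in>set_pmf F. pmf F x * real (card {v\<in>Vs. Q v x}))"
proof -
  have "(\<Sum>v\<in>Vs. measure_pmf.prob F {x. Q v x}) =
        (\<Sum>v\<in>Vs. \<Sum>x\<in>set_pmf F. (if Q v x then pmf F x else 0))"
  proof (rule sum.cong[OF refl])
    fix v
    have "measure_pmf.prob F {x. Q v x} = sum (pmf F) {x\<in>set_pmf F. Q v x}"
      using prob_as_sum[OF fin] by (metis Int_commute Collect_conj_eq Collect_mem_eq)
    also have "\<dots> = (\<Sum>x\<in>set_pmf F. (if Q v x then pmf F x else 0))"
      using fin by (rule sum.inter_filter)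
    finally show "measure_pmf.prob F {x. Q v x} = (\<Sum>x\<in>set_pmf F. (if Q v x then pmf F x else 0))" .
  qed
  also have "\<dots> = (\<Sum>x\<in>set_pmf F. \<Sum>v\<in>Vs. (if Q v x then pmf F x else 0))"
    by (rule sum.swap)
  also have "\<dots> = (\<Sum>x\<in>set_pmf F. pmf F x * real (card {v\<in>Vs. Q v x}))"
  proof (rule sum.cong[OF refl])
    fix x
    have "real (card {v\<in>Vs. Q v x}) = (\<Sum>v\<in>{v\<in>Vs. Q v x}. 1)" by simp
    also have "\<dots> = (\<Sum>v\<in>Vs. if Q v x then 1 else 0)" using fV by (rule sum.inter_filter)
    finally have "pmf F x * real (card {v\<in>Vs. Q v x}) = (\<Sum>v\<in>Vs. pmf F x * (if Q v x then 1 else 0))"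
      by (simp add: sum_distrib_left)
    then show "(\<Sum>v\<in>Vs. (if Q v x then pmf F x else 0)) = pmf F x * real (card {v\<in>Vs. Q v x})"
      by (simp add: if_distrib cong: if_cong)
  qed
  finally show ?thesis .
qed

lemma sum_card_swap:
  assumes fT: "finite T" and fX: "finite X" and sub: "\<And>w. w \<in> T \<Longrightarrow> A w \<subseteq> C"
  shows "(\<Sum>x\<in>X \<inter> C. pmf F x * real (card {w\<in>T. x \<in> A w})) = (\<Sum>w\<in>T. sum (pmf F) (X \<inter> A w))"
proof -
  have "(\<Sum>x\<in>X \<inter> C. pmf F x * real (card {w\<in>T. x \<in> A w})) =
        (\<Sum>x\<in>X \<inter> C. \<Sum>w\<in>T. if x \<in> A w then pmf F x else 0)"
  proof (rule sum.cong[OF refl])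
    fix x
    have "real (card {w\<in>T. x \<in> A w}) = (\<Sum>w\<in>{w\<in>T. x \<in> A w}. 1)" by simp
    also have "\<dots> = (\<Sum>w\<in>T. if x \<in> A w then 1 else 0)" using fT by (rule sum.inter_filter)
    finally show "pmf F x * real (card {w\<in>T. x \<in> A w}) = (\<Sum>w\<in>T. if x \<in> A w then pmf F x else 0)"
      by (simp add: sum_distrib_left if_distrib cong: if_cong)
  qed
  also have "\<dots> = (\<Sum>w\<in>T. \<Sum>x\<in>X \<inter> C. if x \<in> A w then pmf F x else 0)" by (rule sum.swap)
  also have "\<dots> = (\<Sum>w\<in>T. sum (pmf F) (X \<inter> A w))"
  proof (rule sum.cong[OF refl])
    fix w assume w: "w \<in> T"
    have "(\<Sum>x\<in>X \<inter> C. if x \<in> A w then pmf F x else 0) = sum (pmf F) {x \<in> X \<inter> C. x \<in> A w}"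
      using fX by (intro sum.inter_filter[symmetric]) simp
    also have "{x \<in> X \<inter> C. x \<in> A w} = X \<inter> A w" using sub[OF w] by auto
    finally show "(\<Sum>x\<in>X \<inter> C. if x \<in> A w then pmf F x else 0) = sum (pmf F) (X \<inter> A w)" .
  qed
  finally show ?thesis .
qed

lemma prob_cond:
  assumes "A \<subseteq> B"
  shows "measure_pmf.prob F A = measure_pmf.prob F B * cond_prob F A B"
proof -
  have "A \<inter> B = A" using assms by auto
  moreover have "measure_pmf.prob F A \<le> measure_pmf.prob F B" using assms by (rule measure_pmf.finite_measure_mono) simp
  ultimately show ?thesis unfolding cond_prob_def
    by (cases "measure_pmf.prob F B = 0") (auto simp: measure_nonneg antisym)
qed

lemma finite_Ga:
  assumes "finite V1" "finite V2"
  shows "finite (Ga V1 V2 Vs)"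
proof -
  have "Ga V1 V2 Vs \<subseteq> Pow (Pow V1) \<times> Pow (Pow V2)" unfolding Ga_def graph_on_def by auto
  then show ?thesis by (rule finite_subset) (use assms in simp)
qed

lemma class_ineq:
  assumes Vs: "Vs \<subseteq> V1 \<inter> V2" and ob: "bij_betw ob V2 W"
    and supp: "set_pmf F \<subseteq> Ga V1 V2 Vs" and fin: "finite (set_pmf F)" and fW: "finite W"
    and bc: "bayes_construction F V1 V2 W Vs ob Phs" and vn: "vn_scheme V1 V2 W Phi"
    and k: "k \<le> card W" and a: "(a1,a2) \<in> Ga V1 V2 Vs"
  shows "(\<Sum>x\<in>set_pmf F \<inter> cls V1 V2 Vs a1 a2. pmf F x * real (card {v\<in>Vs. rank (Phi (fst x) (relabel ob (snd x)) Vs) (ob v) \<le> k}))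
       \<le> (\<Sum>x\<in>set_pmf F \<inter> cls V1 V2 Vs a1 a2. pmf F x * real (card {v\<in>Vs. rank (Phs (fst x) (relabel ob (snd x))) (ob v) \<le> k}))"
proof -
  define C where "C = cls V1 V2 Vs a1 a2"
  obtain r1 r2 where rC: "(r1,r2) \<in> C"
    and gr: "greedy_ordering W (\<lambda>u. cond_prob F (cls_in V1 V2 Vs ob r1 r2 u Vs) (cls V1 V2 Vs r1 r2))
          (Phs r1 (relabel ob r2))"
    and tr: "\<forall>(g1', g2') \<in> C. \<exists>\<sigma>. is_iso W W \<sigma> (relabel ob r2) (relabel ob g2') \<and>
           Phs g1' (relabel ob g2') = map \<sigma> (Phs r1 (relabel ob r2))"
    using bc a unfolding bayes_construction_def C_def by fastforce
  have r: "(r1,r2) \<in> Ga V1 V2 Vs" using rC cls_sub_Ga unfolding C_def by blast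
  have CC: "cls V1 V2 Vs r1 r2 = C" unfolding C_def using cls_eq[OF a] rC C_def by blast
  define A where "A w = cls_in V1 V2 Vs ob r1 r2 w Vs" for w
  define cp where "cp w = cond_prob F (A w) C" for w
  define Ls where "Ls = Phs r1 (relabel ob r2)"
  define L where "L = Phi r1 (relabel ob r2) Vs"
  have rg: "graph_on V1 r1" "graph_on V2 r2" using Ga_D[OF r] by auto
  have Lo: "is_ordering W L"
    using conjunct1[OF vn[unfolded vn_scheme_def], rule_format, of r1 r2 Vs ob] Vs rg ob unfolding L_def by blast
  have Lso: "is_ordering W Ls" using gr unfolding greedy_ordering_def Ls_def by blast
  have lenL: "length L = card W" using Lo unfolding is_ordering_def by (metis distinct_card)
  have lenLs: "length Ls = card W" using Lso unfolding is_ordering_def by (metis distinct_card)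
  have AC: "A w \<subseteq> C" for w unfolding A_def using cls_in_sub CC by metis
  have memC: "g1 = r1 \<and> (\<exists>\<tau>. is_iso V2 V2 \<tau> r2 g2) \<and> (g1,g2) \<in> Ga V1 V2 Vs" if "(g1,g2) \<in> C" for g1 g2
    using that CC[symmetric] unfolding cls_def by auto
  have eqPhi: "(\<Sum>x\<in>set_pmf F \<inter> C. pmf F x * real (card {v\<in>Vs. rank (Phi (fst x) (relabel ob (snd x)) Vs) (ob v) \<le> k}))
     = (\<Sum>x\<in>set_pmf F \<inter> C. pmf F x * real (card {w\<in>set (take k L). x \<in> A w}))"
  proof (rule sum.cong[OF refl])
    fix x assume "x \<in> set_pmf F \<inter> C"
    then obtain g1 g2 \<tau> where x: "x = (g1,g2)" "g1 = r1" "is_iso V2 V2 \<tau> r2 g2" "(g1,g2) \<in> Ga V1 V2 Vs"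
      using memC by (metis IntD2 surj_pair)
    show "pmf F x * real (card {v\<in>Vs. rank (Phi (fst x) (relabel ob (snd x)) Vs) (ob v) \<le> k}) =
          pmf F x * real (card {w\<in>set (take k L). x \<in> A w})"
      using N_Phi[OF vn Vs ob r x(4) x(2) x(3), of k] x(1) unfolding L_def A_def by simp
  qed
  have eqPhs: "(\<Sum>x\<in>set_pmf F \<inter> C. pmf F x * real (card {v\<in>Vs. rank (Phs (fst x) (relabel ob (snd x))) (ob v) \<le> k}))
     = (\<Sum>x\<in>set_pmf F \<inter> C. pmf F x * real (card {w\<in>set (take k Ls). x \<in> A w}))"
  proof (rule sum.cong[OF refl])
    fix x assume xC: "x \<in> set_pmf F \<inter> C"
    then obtain g1 g2 \<tau> where x: "x = (g1,g2)" "g1 = r1" "is_iso V2 V2 \<tau> r2 g2" "(g1,g2) \<in> Ga V1 V2 Vs"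
      using memC by (metis IntD2 surj_pair)
    obtain \<sigma> where s: "is_iso W W \<sigma> (relabel ob r2) (relabel ob g2)"
      and M: "Phs g1 (relabel ob g2) = map \<sigma> Ls"
      using tr xC x(1) unfolding Ls_def by blast
    show "pmf F x * real (card {v\<in>Vs. rank (Phs (fst x) (relabel ob (snd x))) (ob v) \<le> k}) =
          pmf F x * real (card {w\<in>set (take k Ls). x \<in> A w})"
      using N_Phs[OF ob Vs r x(4) x(2) s Lso M, of k] x(1) unfolding A_def by simp
  qed
  have fT: "finite (set (take k l))" for l :: "'w list" by simp
  have red: "(\<Sum>x\<in>set_pmf F \<inter> C. pmf F x * real (card {w\<in>set (take k l). x \<in> A w}))
      = measure_pmf.prob F C * (\<Sum>w\<in>set (take k l). cp w)" for l
  proof -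
    have "(\<Sum>x\<in>set_pmf F \<inter> C. pmf F x * real (card {w\<in>set (take k l). x \<in> A w}))
        = (\<Sum>w\<in>set (take k l). sum (pmf F) (set_pmf F \<inter> A w))"
      using sum_card_swap[OF fT fin, where A=A and C=C] AC by blast
    also have "\<dots> = (\<Sum>w\<in>set (take k l). measure_pmf.prob F (A w))"
      using prob_as_sum[OF fin] by (simp add: Int_commute)
    also have "\<dots> = (\<Sum>w\<in>set (take k l). measure_pmf.prob F C * cp w)"
      unfolding cp_def using prob_cond[OF AC] by simp
    finally show ?thesis by (simp add: sum_distrib_left)
  qed
  have "(\<Sum>w\<in>set (take k L). cp w) \<le> (\<Sum>w\<in>set (take k Ls). cp w)"
  proof (rule greedy_opt[of W cp Ls L k])
    show "greedy_ordering W cp Ls" using gr unfolding cp_def A_def Ls_def CC .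
    show "distinct L" "set L \<subseteq> W" using Lo unfolding is_ordering_def by auto
    show "k \<le> length Ls" "k \<le> length L" using k lenL lenLs by auto
    show "finite W" by (rule fW)
  qed
  then have "measure_pmf.prob F C * (\<Sum>w\<in>set (take k L). cp w) \<le> measure_pmf.prob F C * (\<Sum>w\<in>set (take k Ls). cp w)"
    by (intro mult_left_mono) auto
  then show ?thesis unfolding C_def[symmetric] eqPhi eqPhs red .
qed

lemma prob_ge:
  "measure_pmf.prob F {(a,b). k+1 \<le> g a b} = 1 - measure_pmf.prob F {(a,b). g a b \<le> (k::nat)}"
proof -
  have "{(a,b). k+1 \<le> g a b} = space (measure_pmf F) - {(a,b). g a b \<le> k}" by auto
  then show ?thesis using measure_pmf.prob_compl[of "{(a,b). g a b \<le> k}" F] by simp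
qed

theorem mainTheorem3:
  fixes n m :: nat
    and V1 V2 Vs :: "'v set"
    and W :: "'w set"
    and ob :: "'v \<Rightarrow> 'w"
    and F :: "('v set set \<times> 'v set set) pmf"
    and Phs :: "'v set set \<Rightarrow> 'w set set \<Rightarrow> 'w list"
  assumes "nominatable V1 V2 F"
    and "card V1 = n" and "card V2 = m"
    and "Vs \<subseteq> V1 \<inter> V2"
    and "bij_betw ob V2 W"
    and "set_pmf F \<subseteq> Ga V1 V2 Vs"
    and "bayes_construction F V1 V2 W Vs ob Phs"
  shows "\<forall>k \<in> {1..m - 1}. \<forall>Phi. vn_scheme V1 V2 W Phi \<longrightarrow>
           loss1 F ob Phs Vs k \<le> loss1 F ob (\<lambda>g1 h. Phi g1 h Vs) Vs k \<and>
           loss2 F ob Phs Vs k \<le> loss2 F ob (\<lambda>g1 h. Phi g1 h Vs) Vs k"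
proof -
  note nom = assms(1) and Vs = assms(4) and ob = assms(5) and supp = assms(6) and bc = assms(7)
  have fV: "finite V1" "finite V2" using nom unfolding nominatable_def by auto
  have fin: "finite (set_pmf F)" using finite_Ga[OF fV] supp finite_subset by blast
  have fW: "finite W" using ob fV(2) bij_betw_finite by blast
  have cW: "card W = m" using ob assms(3) bij_betw_same_card by metis
  have fVs: "finite Vs" using Vs fV finite_subset by blast
  define SP where "SP = set_pmf F"
  define cl where "cl x = cls V1 V2 Vs (fst x) (snd x)" for x
  have grp: "sum f SP = (\<Sum>C\<in>cl ` SP. sum f (SP \<inter> C))" for f :: "_ \<Rightarrow> real"
  proof -
    have "sum f SP = (\<Sum>C\<in>cl ` SP. sum f {x \<in> SP. cl x = C})"
      using fin unfolding SP_def by (rule sum.image_gen)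
    also have "\<dots> = (\<Sum>C\<in>cl ` SP. sum f (SP \<inter> C))"
    proof (rule sum.cong[OF refl])
      fix C assume "C \<in> cl ` SP"
      then obtain a1 a2 where a: "(a1,a2) \<in> SP" "C = cls V1 V2 Vs a1 a2" unfolding cl_def by auto
      have aG: "(a1,a2) \<in> Ga V1 V2 Vs" using a supp SP_def by auto
      have "{x \<in> SP. cl x = C} = SP \<inter> C"
      proof (intro set_eqI iffI)
        fix x assume "x \<in> {x \<in> SP. cl x = C}"
        then have "x \<in> SP" "cl x = C" by auto
        moreover have "x \<in> cl x" unfolding cl_def using self_cls[of "fst x" "snd x"] \<open>x \<in> SP\<close> supp SP_def by auto
        ultimately show "x \<in> SP \<inter> C" by auto
      next
        fix x assume "x \<in> SP \<inter> C"
        then have "cl x = C" unfolding cl_def using cls_eq[OF aG, of "fst x" "snd x"] a by auto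
        then show "x \<in> {x \<in> SP. cl x = C}" using \<open>x \<in> SP \<inter> C\<close> by auto
      qed
      then show "sum f {x \<in> SP. cl x = C} = sum f (SP \<inter> C)" by simp
    qed
    finally show ?thesis .
  qed
  show ?thesis
  proof (intro ballI allI impI)
    fix k Phi assume kk: "k \<in> {1..m - 1}" and vn: "vn_scheme V1 V2 W Phi"
    have k: "k \<le> card W" "1 \<le> k" using kk cW by auto
    define S where "S Ph = (\<Sum>v\<in>Vs. measure_pmf.prob F {(g1, g2). rank (Ph g1 (relabel ob g2)) (ob v) \<le> k})"
      for Ph :: "'v set set \<Rightarrow> 'w set set \<Rightarrow> 'w list"
    define N where "N Ph x = real (card {v\<in>Vs. rank (Ph (fst x) (relabel ob (snd x))) (ob v) \<le> k})"
      for Ph :: "'v set set \<Rightarrow> 'w set set \<Rightarrow> 'w list" and x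
    have Seq: "S Ph = (\<Sum>x\<in>SP. pmf F x * N Ph x)" for Ph
    proof -
      have "S Ph = (\<Sum>v\<in>Vs. measure_pmf.prob F {x. rank (Ph (fst x) (relabel ob (snd x))) (ob v) \<le> k})"
        unfolding S_def by (simp add: case_prod_beta')
      also have "\<dots> = (\<Sum>x\<in>SP. pmf F x * N Ph x)"
        unfolding SP_def N_def by (rule sum_prob_card[OF fin fVs])
      finally show ?thesis .
    qed
    define Phi' where "Phi' = (\<lambda>g1 h. Phi g1 h Vs)"
    have SS: "S Phi' \<le> S Phs"
    proof -
      have "S Phi' = (\<Sum>C\<in>cl ` SP. \<Sum>x\<in>SP \<inter> C. pmf F x * N Phi' x)" using Seq grp by simp
      also have "\<dots> \<le> (\<Sum>C\<in>cl ` SP. \<Sum>x\<in>SP \<inter> C. pmf F x * N Phs x)"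
      proof (rule sum_mono)
        fix C assume "C \<in> cl ` SP"
        then obtain a1 a2 where a: "(a1,a2) \<in> SP" "C = cls V1 V2 Vs a1 a2" unfolding cl_def by auto
        have aG: "(a1,a2) \<in> Ga V1 V2 Vs" using a supp SP_def by auto
        show "(\<Sum>x\<in>SP \<inter> C. pmf F x * N Phi' x) \<le> (\<Sum>x\<in>SP \<inter> C. pmf F x * N Phs x)"
          using class_ineq[OF Vs ob supp fin fW bc vn k(1) aG] a(2)
          unfolding SP_def N_def Phi'_def by simp
      qed
      also have "\<dots> = S Phs" using Seq grp by simp
      finally show ?thesis .
    qed
    have L1: "loss1 F ob Ph Vs k = (1 / real (card Vs)) * (real (card Vs) - S Ph)" for Ph
    proof -
      have "(\<Sum>v\<in>Vs. measure_pmf.prob F {(g1, g2). rank (Ph g1 (relabel ob g2)) (ob v) \<ge> k + 1}) =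
            (\<Sum>v\<in>Vs. 1 - measure_pmf.prob F {(g1, g2). rank (Ph g1 (relabel ob g2)) (ob v) \<le> k})"
      proof (rule sum.cong[OF refl])
        fix v
        show "measure_pmf.prob F {(g1, g2). rank (Ph g1 (relabel ob g2)) (ob v) \<ge> k + 1} =
            1 - measure_pmf.prob F {(g1, g2). rank (Ph g1 (relabel ob g2)) (ob v) \<le> k}"
          by (rule prob_ge)
      qed
      then show ?thesis unfolding loss1_def S_def by (simp add: sum_subtractf)
    qed
    have L2: "loss2 F ob Ph Vs k = 1 - (1 / real k) * S Ph" for Ph
      unfolding loss2_def S_def by simp
    have "(1 / real (card Vs)) * (real (card Vs) - S Phs) \<le> (1 / real (card Vs)) * (real (card Vs) - S Phi')"
      using SS by (intro mult_left_mono) auto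
    moreover have "(1 / real k) * S Phi' \<le> (1 / real k) * S Phs"
      using SS by (intro mult_left_mono) auto
    ultimately show "loss1 F ob Phs Vs k \<le> loss1 F ob (\<lambda>g1 h. Phi g1 h Vs) Vs k \<and>
           loss2 F ob Phs Vs k \<le> loss2 F ob (\<lambda>g1 h. Phi g1 h Vs) Vs k"
      unfolding Phi'_def L1 L2 by simp
  qed
qed

end
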